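(* Let $p\geq 5$ be an odd integer. For any real number $x\geq 2$, \[ \left(\left(1-\frac{1}{4x}\right)^2+\frac{1}{8x^2}\right)^{-\frac1p-1}\left(1-\frac{1}{4x}\right)+\left(\left(1+\frac{1}{4x}\right)^2+\frac{1}{8x^2}\right)^{-\frac1p-1}\left(1+\frac{1}{4x}\right)<2. \] *)

theory Defs
  imports Complex_Main
begin

end

theory Submission
  imports Defs "HOL-Analysis.Analysis"
begin

lemma bern: fixes u r :: real assumes "u > 0" "0 \<le> r" "r \<le> 1"
  shows "u powr r \<le> r * u + (1 - r)"
  using Youngs_inequality_0[of r "1 - r" u 1] assms by simp

lemma powr_split: fixes A r :: real assumes "A > 0"
  shows "A powr (-r - 1) = (1/A) powr r * (1/A)"
proof -
  have "A powr (-r - 1) = A powr (-r) * A powr (-1)" using powr_add[of A "-r" "-1"] by simp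
  also have "\<dots> = (1/A) powr r * (1/A)" using assms
    by (simp add: powr_minus powr_divide powr_minus_divide field_simps)
  finally show ?thesis .
qed

lemma key: fixes t r :: real assumes "t > 0" "0 \<le> r" "r \<le> 1/5"
  shows "(1-t) * (r + (1-r)*(1-2*t+3*t^2)) * (1+2*t+3*t^2)^2
       + (1+t) * (r + (1-r)*(1+2*t+3*t^2)) * (1-2*t+3*t^2)^2
       < 2 * (1-2*t+3*t^2)^2 * (1+2*t+3*t^2)^2"
proof -
  have id: "2 * (1-2*t+3*t^2)^2 * (1+2*t+3*t^2)^2 - ((1-t) * (r + (1-r)*(1-2*t+3*t^2)) * (1+2*t+3*t^2)^2
       + (1+t) * (r + (1-r)*(1+2*t+3*t^2)) * (1-2*t+3*t^2)^2)
     = t^2 * ((2 - 6*r) + (22 + 28*r)*t^2 + (54+18*r)*t^4 + 162*t^6)"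
    by (simp add: algebra_simps power2_eq_square power_numeral_reduce)
  have "t^2 > 0" using assms by simp
  moreover have "(2 - 6*r) + (22 + 28*r)*t^2 + (54+18*r)*t^4 + 162*t^6 > 0"
    using assms by (simp add: add_pos_nonneg)
  ultimately have "t^2 * ((2 - 6*r) + (22 + 28*r)*t^2 + (54+18*r)*t^4 + 162*t^6) > 0" by simp
  with id show ?thesis by linarith
qed

theorem lemma4p1:
  fixes p :: int and x :: real
  assumes "odd p" and "p \<ge> 5" and "x \<ge> 2"
  shows "((1 - 1/(4*x))^2 + 1/(8*x^2)) powr (-1/real_of_int p - 1) * (1 - 1/(4*x))
       + ((1 + 1/(4*x))^2 + 1/(8*x^2)) powr (-1/real_of_int p - 1) * (1 + 1/(4*x)) < 2"
proof -
  define t where "t = 1/(4*x)"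
  define r where "r = 1/real_of_int p"
  have t0: "t > 0" and t1: "t \<le> 1/8" using assms(3) by (auto simp: t_def field_simps)
  have r0: "0 \<le> r" and r1: "r \<le> 1/5" using assms(2) by (auto simp: r_def field_simps)
  have e: "1/(8*x^2) = 2*t^2" using assms(3) by (simp add: t_def field_simps power2_eq_square)
  define A where "A = 1-2*t+3*t^2"
  define B where "B = 1+2*t+3*t^2"
  have hA: "(1 - 1/(4*x))^2 + 1/(8*x^2) = A" unfolding e A_def t_def[symmetric]
    by (simp add: algebra_simps power2_eq_square)
  have hB: "(1 + 1/(4*x))^2 + 1/(8*x^2) = B" unfolding e B_def t_def[symmetric]
    by (simp add: algebra_simps power2_eq_square)
  have "A = (1-t)^2 + 2*t^2" by (simp add: A_def power2_eq_square algebra_simps)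
  moreover have "(1-t)^2 + 2*t^2 > 0" using t0 by (intro add_nonneg_pos) auto
  ultimately have Ap: "A > 0" by simp
  have "3*t^2 \<ge> 0" by simp
  hence Bp: "B > 0" unfolding B_def using t0 by linarith
  have "-1/real_of_int p - 1 = -r - 1" by (simp add: r_def)
  hence L: "?thesis \<longleftrightarrow> (1/A) powr r * (1/A) * (1-t) + (1/B) powr r * (1/B) * (1+t) < 2"
    using hA hB powr_split[OF Ap] powr_split[OF Bp] by (simp add: t_def)
  have b1: "(1/A) powr r \<le> r * (1/A) + (1-r)" using bern[of "1/A" r] Ap r0 r1 by simp
  have b2: "(1/B) powr r \<le> r * (1/B) + (1-r)" using bern[of "1/B" r] Bp r0 r1 by simp
  have c1: "(1/A) powr r * (1/A) * (1-t) \<le> (r * (1/A) + (1-r)) * (1/A) * (1-t)"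
    using b1 Ap t1 by (intro mult_right_mono) auto
  have c2: "(1/B) powr r * (1/B) * (1+t) \<le> (r * (1/B) + (1-r)) * (1/B) * (1+t)"
    using b2 Bp t0 by (intro mult_right_mono) auto
  have k: "(1-t) * (r + (1-r)*A) * B^2 + (1+t) * (r + (1-r)*B) * A^2 < 2 * A^2 * B^2"
    using key[OF t0 r0 r1] unfolding A_def B_def .
  have eq: "(r * (1/A) + (1-r)) * (1/A) * (1-t) + (r * (1/B) + (1-r)) * (1/B) * (1+t)
     = ((1-t) * (r + (1-r)*A) * B^2 + (1+t) * (r + (1-r)*B) * A^2) / (A^2 * B^2)"
    using Ap Bp by (simp add: field_simps power2_eq_square)
  have "((1-t) * (r + (1-r)*A) * B^2 + (1+t) * (r + (1-r)*B) * A^2) / (A^2 * B^2) < 2"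
    using k Ap Bp by (simp add: divide_less_eq mult.assoc)
  with eq c1 c2 L show ?thesis by linarith
qed

end
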